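(* Let $(V,\varphi,\xi,\eta,g)$ with $n\ge2$, the space $\mathcal{F}$, the inner product $\langle\cdot,\cdot\rangle$, the group $G$, the subspace $W_1$ and the subspaces $\mathcal{F}_1,\mathcal{F}_2,\mathcal{F}_3$ be as in the context. Then $W_1=\mathcal{F}_1\oplus\mathcal{F}_2\oplus\mathcal{F}_3$, the summands are mutually orthogonal with respect to $\langle\cdot,\cdot\rangle$, and each is invariant under the action of $G$.
   Context: Let $V$ be a real vector space of dimension $2n+1$ with an endomorphism $\varphi$, a vector $\xi$ and a linear form $\eta$ such that $\varphi\xi=0$, $\eta\circ\varphi=0$, $\eta(\xi)=1$, $\varphi^2=\mathrm{id}-\eta\otimes\xi$, and such that $\varphi$ restricted to $\mathbb{D}=\ker\eta$ has eigenvalues $\pm1$ with eigenspaces of equal dimension $n$. Let $g$ be a nondegenerate symmetric bilinear form on $V$ with $g(\varphi X,\varphi Y)=-g(X,Y)+\eta(X)\eta(Y)$; then $\eta(X)=g(X,\xi)$. Write $hX=X-\eta(X)\xi$. Fix a basis $\{e_1,\dots,e_{2n}\}$ of $\mathbb{D}$, write $Y=Y^ie_i+\eta(Y)\xi$. Let $\mathcal{F}$ be the vector space of all $(0,3)$-tensors of the form $F(X,Y,Z)=Y^ig(\mathcal{A}_{e_i}X,Z)+\eta(Y)g(\mathcal{A}_\xi X,\varphi Z)$, where $\mathcal{A}_{e_i}:V\to V$ and $\mathcal{A}_\xi:V\to\mathbb{D}$ are linear maps satisfying for all $X$, $i,j$: $g(\mathcal{A}_{e_i}X,e_j)=-g(\mathcal{A}_{e_j}X,e_i)$;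 $\mathcal{A}_{\varphi e_i}X=-\varphi(\mathcal{A}_{e_i}X)-g(\mathcal{A}_\xi X,e_i)\xi$ (index extended linearly); $\eta(\mathcal{A}_{e_i}X)=-g(\mathcal{A}_\xi X,\varphi e_i)$; $\eta(\mathcal{A}_\xi X)=0$. Inner product: $\langle F_1,F_2\rangle=g^{aq}g^{br}g^{cs}F_1(f_a,f_b,f_c)F_2(f_q,f_r,f_s)$ for a basis $\{f_a\}$ of $V$, $(g^{ab})$ inverse of $(g(f_a,f_b))$. For $F\in\mathcal{F}$ put $\theta_F(X)=g^{ab}F(f_a,f_b,X)$. $G$ is the group of linear automorphisms $a$ of $V$ with $a\varphi=\varphi a$, $a\xi=\xi$, $\eta\circ a=\eta$, $g(aX,aY)=g(X,Y)$, acting by $(\lambda(a)F)(X,Y,Z)=F(a^{-1}X,a^{-1}Y,a^{-1}Z)$. Let $W_1=\{F\in\mathcal{F}:F(X,Y,Z)=F(hX,hY,hZ)\ \forall X,Y,Z\}$. On $W_1$ define $m_1(F)(X,Y,Z)=\tfrac12\{F(X,Y,Z)-F(\varphi X,Y,\varphi Z)\}$ and $m_2(F)(X,Y,Z)=\tfrac12\{F(X,Y,Z)+F(\varphi X,Y,\varphi Z)\}$; $W_{11}=\mathrm{Im}\,m_1$, $\mathcal{F}_3=\mathrm{Im}\,m_2$. On $W_{11}$ define $m_3(F)(X,Y,Z)=F(X,Y,Z)-\frac{1}{2(n-1)}\{g(X,\varphi Y)\theta_F(\varphi Z)-g(X,\varphi Z)\theta_F(\varphi Y)-g(\varphi X,\varphi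 Y)\theta_F(Z)+g(\varphi X,\varphi Z)\theta_F(Y)\}$; $\mathcal{F}_1=\ker m_3$ and $\mathcal{F}_2=\mathrm{Im}\,m_3$ (subspaces of $W_{11}$). *)

theory Defs
  imports "HOL-Analysis.Analysis"
begin

text \<open>V is an arbitrary finite-dimensional real vector space, modelled as a type of class
  euclidean_space (its Basis is used as the basis {f_a} in the contractions).\<close>

type_synonym 'v tensor3 = "'v \<Rightarrow> 'v \<Rightarrow> 'v \<Rightarrow> real"

definition apm_structure ::
  "nat \<Rightarrow> ('v::euclidean_space \<Rightarrow> 'v) \<Rightarrow> 'v \<Rightarrow> ('v \<Rightarrow> real) \<Rightarrow> ('v \<Rightarrow> 'v \<Rightarrow> real) \<Rightarrow> bool"
  where
  "apm_structure n \<phi> \<xi> \<eta> g \<longleftrightarrow>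
     DIM('v) = 2 * n + 1 \<and>
     linear \<phi> \<and> linear \<eta> \<and>
     \<phi> \<xi> = 0 \<and> (\<forall>X. \<eta> (\<phi> X) = 0) \<and> \<eta> \<xi> = 1 \<and>
     (\<forall>X. \<phi> (\<phi> X) = X - \<eta> X *\<^sub>R \<xi>) \<and>
     dim {X. \<eta> X = 0 \<and> \<phi> X = X} = n \<and>
     dim {X. \<eta> X = 0 \<and> \<phi> X = - X} = n \<and>
     bilinear g \<and> (\<forall>X Y. g X Y = g Y X) \<and>
     (\<forall>X. (\<forall>Y. g X Y = 0) \<longrightarrow> X = 0) \<and>
     (\<forall>X Y. g (\<phi> X) (\<phi> Y) = - g X Y + \<eta> X * \<eta> Y)"

definition hmap :: "'v::real_vector \<Rightarrow> ('v \<Rightarrow> real) \<Rightarrow> 'v \<Rightarrow> 'v" where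
  "hmap \<xi> \<eta> X = X - \<eta> X *\<^sub>R \<xi>"

definition ginv :: "('v::euclidean_space \<Rightarrow> 'v \<Rightarrow> real) \<Rightarrow> 'v \<Rightarrow> 'v \<Rightarrow> real" where
  "ginv g = (SOME h. \<forall>a\<in>Basis. \<forall>c\<in>Basis.
               (\<Sum>b\<in>Basis. h a b * g b c) = (if a = c then 1 else 0))"

definition tensor_ip :: "('v::euclidean_space \<Rightarrow> 'v \<Rightarrow> real) \<Rightarrow> 'v tensor3 \<Rightarrow> 'v tensor3 \<Rightarrow> real" where
  "tensor_ip g F1 F2 =
     (\<Sum>a\<in>Basis. \<Sum>b\<in>Basis. \<Sum>c\<in>Basis. \<Sum>q\<in>Basis. \<Sum>r\<in>Basis. \<Sum>s\<in>Basis.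
        ginv g a q * ginv g b r * ginv g c s * F1 a b c * F2 q r s)"

definition theta :: "('v::euclidean_space \<Rightarrow> 'v \<Rightarrow> real) \<Rightarrow> 'v tensor3 \<Rightarrow> 'v \<Rightarrow> real" where
  "theta g F X = (\<Sum>a\<in>Basis. \<Sum>b\<in>Basis. ginv g a b * F a b X)"

text \<open>The space \<F>. The family A_{e_i}, extended linearly in the index over D = ker eta,
  is modelled as a bilinear map A with A Y X = A_Y X (only Y in D matters, since
  Y^i A_{e_i} = A_{hY}).\<close>
definition Fspace ::
  "('v::euclidean_space \<Rightarrow> 'v) \<Rightarrow> 'v \<Rightarrow> ('v \<Rightarrow> real) \<Rightarrow> ('v \<Rightarrow> 'v \<Rightarrow> real) \<Rightarrow> 'v tensor3 set"
  where
  "Fspace \<phi> \<xi> \<eta> g = {F. \<exists>(A :: 'v \<Rightarrow> 'v \<Rightarrow> 'v) (A\<xi> :: 'v \<Rightarrow> 'v).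
      bilinear A \<and> linear A\<xi> \<and> (\<forall>X. \<eta> (A\<xi> X) = 0) \<and>
      (\<forall>X Y W. \<eta> Y = 0 \<longrightarrow> \<eta> W = 0 \<longrightarrow> g (A Y X) W = - g (A W X) Y) \<and>
      (\<forall>X Y. \<eta> Y = 0 \<longrightarrow> A (\<phi> Y) X = - \<phi> (A Y X) - g (A\<xi> X) Y *\<^sub>R \<xi>) \<and>
      (\<forall>X Y. \<eta> Y = 0 \<longrightarrow> \<eta> (A Y X) = - g (A\<xi> X) (\<phi> Y)) \<and>
      F = (\<lambda>X Y Z. g (A (hmap \<xi> \<eta> Y) X) Z + \<eta> Y * g (A\<xi> X) (\<phi> Z))}"

definition Ggroup ::
  "('v::euclidean_space \<Rightarrow> 'v) \<Rightarrow> 'v \<Rightarrow> ('v \<Rightarrow> real) \<Rightarrow> ('v \<Rightarrow> 'v \<Rightarrow> real) \<Rightarrow> ('v \<Rightarrow> 'v) set"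
  where
  "Ggroup \<phi> \<xi> \<eta> g = {a. linear a \<and> bij a \<and> a \<circ> \<phi> = \<phi> \<circ> a \<and> a \<xi> = \<xi> \<and>
      \<eta> \<circ> a = \<eta> \<and> (\<forall>X Y. g (a X) (a Y) = g X Y)}"

definition act :: "('v \<Rightarrow> 'v) \<Rightarrow> 'v tensor3 \<Rightarrow> 'v tensor3" where
  "act a F = (\<lambda>X Y Z. F (inv a X) (inv a Y) (inv a Z))"

definition W1 ::
  "('v::euclidean_space \<Rightarrow> 'v) \<Rightarrow> 'v \<Rightarrow> ('v \<Rightarrow> real) \<Rightarrow> ('v \<Rightarrow> 'v \<Rightarrow> real) \<Rightarrow> 'v tensor3 set"
  where
  "W1 \<phi> \<xi> \<eta> g = {F \<in> Fspace \<phi> \<xi> \<eta> g.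
      \<forall>X Y Z. F X Y Z = F (hmap \<xi> \<eta> X) (hmap \<xi> \<eta> Y) (hmap \<xi> \<eta> Z)}"

definition m1 :: "('v \<Rightarrow> 'v) \<Rightarrow> 'v tensor3 \<Rightarrow> 'v tensor3" where
  "m1 \<phi> F = (\<lambda>X Y Z. (1/2) * (F X Y Z - F (\<phi> X) Y (\<phi> Z)))"

definition m2 :: "('v \<Rightarrow> 'v) \<Rightarrow> 'v tensor3 \<Rightarrow> 'v tensor3" where
  "m2 \<phi> F = (\<lambda>X Y Z. (1/2) * (F X Y Z + F (\<phi> X) Y (\<phi> Z)))"

definition m3 :: "nat \<Rightarrow> ('v::euclidean_space \<Rightarrow> 'v) \<Rightarrow> ('v \<Rightarrow> 'v \<Rightarrow> real) \<Rightarrow> 'v tensor3 \<Rightarrow> 'v tensor3" where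
  "m3 n \<phi> g F = (\<lambda>X Y Z. F X Y Z - (1 / (2 * (real n - 1))) *
      (g X (\<phi> Y) * theta g F (\<phi> Z) - g X (\<phi> Z) * theta g F (\<phi> Y)
       - g (\<phi> X) (\<phi> Y) * theta g F Z + g (\<phi> X) (\<phi> Z) * theta g F Y))"

definition W11 where "W11 \<phi> \<xi> \<eta> g = m1 \<phi> ` W1 \<phi> \<xi> \<eta> g"
definition F3 where "F3 \<phi> \<xi> \<eta> g = m2 \<phi> ` W1 \<phi> \<xi> \<eta> g"
definition F1 where "F1 n \<phi> \<xi> \<eta> g = {F \<in> W11 \<phi> \<xi> \<eta> g. m3 n \<phi> g F = (\<lambda>X Y Z. 0)}"
definition F2 where "F2 n \<phi> \<xi> \<eta> g = m3 n \<phi> g ` W11 \<phi> \<xi> \<eta> g"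

end

theory Submission imports Defs begin

locale apm =
  fixes n :: nat and \<phi> :: "'v::euclidean_space \<Rightarrow> 'v" and \<xi> :: 'v
    and \<eta> :: "'v \<Rightarrow> real" and g :: "'v \<Rightarrow> 'v \<Rightarrow> real"
  assumes n2: "n \<ge> 2" and S: "apm_structure n \<phi> \<xi> \<eta> g"
begin

lemma dimV: "DIM('v) = 2 * n + 1" using S by (simp add: apm_structure_def)
lemma lin_phi: "linear \<phi>" using S by (simp add: apm_structure_def)
lemma lin_eta: "linear \<eta>" using S by (simp add: apm_structure_def)
lemma phi_xi[simp]: "\<phi> \<xi> = 0" using S by (simp add: apm_structure_def)
lemma eta_phi[simp]: "\<eta> (\<phi> X) = 0" using S by (simp add: apm_structure_def)
lemma eta_xi[simp]: "\<eta> \<xi> = 1" using S by (simp add: apm_structure_def)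
lemma phi_phi[simp]: "\<phi> (\<phi> X) = X - \<eta> X *\<^sub>R \<xi>" using S by (simp add: apm_structure_def)
lemma bil_g: "bilinear g" using S by (simp add: apm_structure_def)
lemma g_sym: "g X Y = g Y X" using S by (simp add: apm_structure_def)
lemma g_nondeg: "(\<And>Y. g X Y = 0) \<Longrightarrow> X = 0" using S by (simp add: apm_structure_def)
lemma g_phiphi: "g (\<phi> X) (\<phi> Y) = - g X Y + \<eta> X * \<eta> Y" using S by (simp add: apm_structure_def)

lemmas phi_simps[simp] = linear_add[OF lin_phi] linear_diff[OF lin_phi] linear_scale[OF lin_phi]
  linear_0[OF lin_phi] linear_neg[OF lin_phi]
lemmas eta_simps[simp] = linear_add[OF lin_eta] linear_diff[OF lin_eta] linear_scale[OF lin_eta]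
  linear_0[OF lin_eta] linear_neg[OF lin_eta]
lemmas g_simps[simp] = bilinear_ladd[OF bil_g] bilinear_radd[OF bil_g] bilinear_lmul[OF bil_g]
  bilinear_rmul[OF bil_g] bilinear_lsub[OF bil_g] bilinear_rsub[OF bil_g]
  bilinear_lzero[OF bil_g] bilinear_rzero[OF bil_g] bilinear_lneg[OF bil_g] bilinear_rneg[OF bil_g]

lemma lin_gl: "linear (\<lambda>X. g X Y)" using bil_g by (simp add: bilinear_def)
lemma lin_gr: "linear (\<lambda>Y. g X Y)" using bil_g by (simp add: bilinear_def)

lemma g_xi_r[simp]: "g X \<xi> = \<eta> X"
proof -
  have "g (\<phi> X) (\<phi> \<xi>) = - g X \<xi> + \<eta> X * \<eta> \<xi>" by (rule g_phiphi)
  then show ?thesis by simp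
qed
lemma g_xi_l[simp]: "g \<xi> X = \<eta> X" using g_xi_r g_sym by metis

lemma g_phi_l[simp]: "g (\<phi> X) Y = - g X (\<phi> Y)"
proof -
  have "g (\<phi> X) (\<phi> (\<phi> Y)) = - g X (\<phi> Y) + \<eta> X * \<eta> (\<phi> Y)" by (rule g_phiphi)
  then show ?thesis by simp
qed

lemma lin_expand: "linear (l::'v\<Rightarrow>real) \<Longrightarrow> l v = (\<Sum>b\<in>Basis. (v \<bullet> b) * l b)"
proof -
  assume l: "linear l"
  have "l v = l (\<Sum>b\<in>Basis. (v \<bullet> b) *\<^sub>R b)" by (simp add: euclidean_representation)
  also have "\<dots> = (\<Sum>b\<in>Basis. (v \<bullet> b) * l b)" by (simp add: linear_sum[OF l] linear_scale[OF l])
  finally show ?thesis .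
qed

lemma g_ext: "(\<And>b. b \<in> Basis \<Longrightarrow> g X b = g Y b) \<Longrightarrow> X = Y"
proof -
  assume h: "\<And>b. b \<in> Basis \<Longrightarrow> g X b = g Y b"
  have "g (X - Y) Z = 0" for Z
    using lin_expand[OF lin_gr, of "X - Y" Z] h by simp
  then show ?thesis using g_nondeg[of "X - Y"] by simp
qed

lemma raise_ex: "linear u \<Longrightarrow> \<exists>w. \<forall>X. g w X = u X"
proof -
  assume u: "linear u"
  define T where "T w = (\<Sum>b\<in>Basis. g w b *\<^sub>R b)" for w
  have lT: "linear T" unfolding T_def
  proof (intro linear_compose_sum ballI)
    fix b show "linear (\<lambda>w. g w b *\<^sub>R b)" by (rule linearI) (simp_all add: scaleR_add_left)
  qed
  have "inj T"
  proof (rule linear_injective_0[OF lT, THEN iffD2], intro allI impI)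
    fix w assume "T w = 0"
    then have "g w b = 0" if "b \<in> Basis" for b
      using that unfolding T_def euclidean_representation_sum by simp
    then show "w = 0" using g_ext[of w 0] by simp
  qed
  then have "surj T" using linear_injective_imp_surjective[OF lT] by simp
  then obtain w where w: "T w = (\<Sum>b\<in>Basis. u b *\<^sub>R b)" by (metis surjD)
  have "g w b = u b" if "b \<in> Basis" for b
    using w that unfolding T_def by (simp add: euclidean_representation_sum_fun euclidean_representation_sum)
  then have "g w X = u X" for X
    using lin_expand[OF lin_gr[of w], of X] lin_expand[OF u, of X] by simp
  then show ?thesis by blast
qed

definition raise :: "('v \<Rightarrow> real) \<Rightarrow> 'v" where "raise u = (SOME w. \<forall>X. g w X = u X)"

lemma g_raise[simp]: "linear u \<Longrightarrow> g (raise u) X = u X"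
  using someI_ex[OF raise_ex] unfolding raise_def by blast

lemma raise_unique: "linear u \<Longrightarrow> (\<And>X. g w X = u X) \<Longrightarrow> raise u = w"
  by (rule g_ext) simp

definition d :: "'v \<Rightarrow> 'v" where "d a = raise (\<lambda>X. X \<bullet> a)"

lemma g_d[simp]: "g (d a) X = X \<bullet> a"
  proof -
  have "linear (\<lambda>X. X \<bullet> a)" by (rule linearI) (simp_all add: inner_add_left)
  then show ?thesis unfolding d_def by simp
qed

lemma d_sym: "d a \<bullet> b = d b \<bullet> a"
proof -
  have "d a \<bullet> b = g (d b) (d a)" by simp
  also have "\<dots> = g (d a) (d b)" by (rule g_sym)
  also have "\<dots> = d b \<bullet> a" by simp
  finally show ?thesis .
qed

lemma contr: "linear (l::'v\<Rightarrow>real) \<Longrightarrow> (\<Sum>b\<in>Basis. (v \<bullet> b) * l b) = l v"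
  using lin_expand[of l v] by simp

lemma ginv_eq: "(a::'v) \<in> Basis \<Longrightarrow> (b::'v) \<in> Basis \<Longrightarrow> ginv g a b = d a \<bullet> b"
proof -
  let ?P = "\<lambda>h::'v\<Rightarrow>'v\<Rightarrow>real. \<forall>a\<in>(Basis::'v set). \<forall>c\<in>Basis. (\<Sum>b\<in>Basis. h a b * g b c) = (if a = c then 1 else (0::real))"
  have ex: "?P (\<lambda>a b. d a \<bullet> b)"
  proof (intro ballI)
    fix a c :: 'v assume a: "a \<in> Basis" and c: "c \<in> Basis"
    have "(\<Sum>b\<in>Basis. (d a \<bullet> b) * g b c) = g (d a) c"
      using contr[OF lin_gl[of c], of "d a"] by simp
    then show "(\<Sum>b\<in>Basis. (d a \<bullet> b) * g b c) = (if a = c then 1 else 0)"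
      using a c by (simp add: inner_Basis)
  qed
  have P: "?P (ginv g)" unfolding ginv_def by (rule someI[of ?P, OF ex])
  assume a: "a \<in> Basis" and b: "b \<in> Basis"
  define w where "w = (\<Sum>b\<in>Basis. ginv g a b *\<^sub>R b)"
  have "g w c = g (d a) c" if c: "c \<in> Basis" for c
  proof -
    have "g w c = (\<Sum>b\<in>Basis. ginv g a b * g b c)"
      unfolding w_def by (simp add: linear_sum[OF lin_gl] linear_scale[OF lin_gl])
    also have "\<dots> = (if a = c then 1 else 0)" using P a c by blast
    also have "\<dots> = g (d a) c" using a c by (simp add: inner_Basis)
    finally show ?thesis .
  qed
  then have "w = d a" by (rule g_ext)
  then show ?thesis using b unfolding w_def by (metis euclidean_representation_sum)
qed

lemma raise_sum: "linear u \<Longrightarrow> raise u = (\<Sum>a\<in>Basis. u a *\<^sub>R d a)"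
proof (rule raise_unique)
  fix X assume u: "linear u"
  have "(\<Sum>a\<in>Basis. u a * (X \<bullet> a)) = (\<Sum>a\<in>Basis. (X \<bullet> a) * u a)" by (simp add: mult.commute)
  then show "g (\<Sum>a\<in>Basis. u a *\<^sub>R d a) X = u X"
    by (simp add: linear_sum[OF lin_gl] linear_scale[OF lin_gl] contr[OF u])
qed

lemma K1: "linear (u::'v\<Rightarrow>real) \<Longrightarrow> linear (v::'v\<Rightarrow>real) \<Longrightarrow> (\<Sum>a\<in>Basis. u a * v (d a)) = v (raise u)"
  by (simp add: raise_sum linear_sum linear_scale)
lemma raise_gl[simp]: "raise (\<lambda>x. g x Y) = Y"
  by (rule raise_unique[OF lin_gl]) (simp add: g_sym)
lemma raise_gr[simp]: "raise (\<lambda>x. g Y x) = Y"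
  by (rule raise_unique[OF lin_gr]) simp
lemma raise_eta[simp]: "raise \<eta> = \<xi>"
  by (rule raise_unique[OF lin_eta]) simp

lemma lin_innerL: "linear (\<lambda>x. (L::'v\<Rightarrow>'v) x \<bullet> c)" if "linear L"
  using that by (rule linear_compose[of L "\<lambda>x. x \<bullet> c", unfolded o_def]) (rule linearI, simp_all add: inner_add_left)

lemma raise_phi: "raise (\<lambda>x. \<phi> x \<bullet> c) = - \<phi> (d c)"
  by (rule raise_unique[OF lin_innerL[OF lin_phi]]) simp

lemma K2:
  fixes \<beta> :: "'v \<Rightarrow> 'v \<Rightarrow> real" and L L' M :: "'v \<Rightarrow> 'v"
  assumes b1: "\<And>y. linear (\<lambda>x. \<beta> x y)" and b2: "\<And>x. linear (\<lambda>y. \<beta> x y)"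
    and L: "linear L" and M: "linear M"
  shows "(\<Sum>a\<in>Basis. \<beta> (L a) (M (d a))) = (\<Sum>c\<in>Basis. \<beta> c (M (raise (\<lambda>x. L x \<bullet> c))))"
proof -
  have "(\<Sum>a\<in>Basis. \<beta> (L a) (M (d a))) = (\<Sum>a\<in>Basis. \<Sum>c\<in>Basis. (L a \<bullet> c) * \<beta> c (M (d a)))"
    by (rule sum.cong[OF refl]) (rule lin_expand[OF b1])
  also have "\<dots> = (\<Sum>c\<in>Basis. \<Sum>a\<in>Basis. (L a \<bullet> c) * \<beta> c (M (d a)))" by (rule sum.swap)
  also have "\<dots> = (\<Sum>c\<in>Basis. \<beta> c (M (raise (\<lambda>x. L x \<bullet> c))))"
  proof (rule sum.cong[OF refl])
    fix c
    have lc: "linear (\<lambda>y. \<beta> c (M y))" using linear_compose[OF M b2[of c]] by (simp add: o_def)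
    show "(\<Sum>a\<in>Basis. (L a \<bullet> c) * \<beta> c (M (d a))) = \<beta> c (M (raise (\<lambda>x. L x \<bullet> c)))"
      by (rule K1[OF lin_innerL[OF L] lc])
  qed
  finally show ?thesis .
qed

lemma Kphi:
  fixes \<beta> :: "'v \<Rightarrow> 'v \<Rightarrow> real" and L L' M :: "'v \<Rightarrow> 'v"
  assumes b1: "\<And>y. linear (\<lambda>x. \<beta> x y)" and b2: "\<And>x. linear (\<lambda>y. \<beta> x y)"
    and z: "\<And>x. \<beta> x \<xi> = 0"
  shows "(\<Sum>a\<in>Basis. \<beta> (\<phi> a) (\<phi> (d a))) = - (\<Sum>a\<in>Basis. \<beta> a (d a))"
proof -
  have "(\<Sum>a\<in>Basis. \<beta> (\<phi> a) (\<phi> (d a))) = (\<Sum>c\<in>Basis. \<beta> c (\<phi> (- \<phi> (d c))))"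
    using K2[OF b1 b2 lin_phi lin_phi] by (simp add: raise_phi)
  also have "\<dots> = (\<Sum>c\<in>Basis. - \<beta> c (d c))"
    by (rule sum.cong[OF refl]) (simp add: linear_neg[OF b2] linear_diff[OF b2] linear_scale[OF b2] z)
  finally show ?thesis by (simp add: sum_negf)
qed

lemma KL:
  fixes \<beta> :: "'v \<Rightarrow> 'v \<Rightarrow> real" and L L' M :: "'v \<Rightarrow> 'v"
  assumes b1: "\<And>y. linear (\<lambda>x. \<beta> x y)" and b2: "\<And>x. linear (\<lambda>y. \<beta> x y)"
    and L: "linear L" and LL': "\<And>x. L (L' x) = x" and gL: "\<And>X Y. g (L X) (L Y) = g X Y"
  shows "(\<Sum>a\<in>Basis. \<beta> (L a) (L (d a))) = (\<Sum>a\<in>Basis. \<beta> a (d a))"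
proof -
  have r: "raise (\<lambda>x. L x \<bullet> c) = L' (d c)" for c
  proof (rule raise_unique[OF lin_innerL[OF L]])
    fix X have "g (L' (d c)) X = g (L (L' (d c))) (L X)" by (simp add: gL)
    then show "g (L' (d c)) X = L X \<bullet> c" by (simp add: LL')
  qed
  show ?thesis using K2[OF b1 b2 L L] by (simp add: r LL')
qed

lemma Ksym:
  fixes \<beta> :: "'v \<Rightarrow> 'v \<Rightarrow> real" and L L' M :: "'v \<Rightarrow> 'v"
  assumes b1: "\<And>y. linear (\<lambda>x. \<beta> x y)" and b2: "\<And>x. linear (\<lambda>y. \<beta> x y)"
  shows "(\<Sum>a\<in>Basis. \<beta> a (d a)) = (\<Sum>a\<in>Basis. \<beta> (d a) a)"
proof -
  have "(\<Sum>a\<in>Basis. \<beta> a (d a)) = (\<Sum>a\<in>Basis. \<Sum>b\<in>Basis. (d a \<bullet> b) * \<beta> a b)"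
    by (rule sum.cong[OF refl]) (rule lin_expand[OF b2])
  also have "\<dots> = (\<Sum>b\<in>Basis. \<Sum>a\<in>Basis. (d b \<bullet> a) * \<beta> a b)"
    by (subst sum.swap) (simp add: d_sym)
  also have "\<dots> = (\<Sum>b\<in>Basis. \<beta> (d b) b)"
    by (rule sum.cong[OF refl]) (rule lin_expand[OF b1, symmetric])
  finally show ?thesis .
qed

lemma Kanti:
  fixes \<beta> :: "'v \<Rightarrow> 'v \<Rightarrow> real" and L L' M :: "'v \<Rightarrow> 'v"
  assumes b1: "\<And>y. linear (\<lambda>x. \<beta> x y)" and b2: "\<And>x. linear (\<lambda>y. \<beta> x y)"
    and an: "\<And>x y. \<beta> x y = - \<beta> y x"
  shows "(\<Sum>a\<in>Basis. \<beta> a (d a)) = 0"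
proof -
  have "(\<Sum>a\<in>Basis. \<beta> a (d a)) = (\<Sum>a\<in>Basis. \<beta> (d a) a)" by (rule Ksym[OF b1 b2])
  also have "\<dots> = - (\<Sum>a\<in>Basis. \<beta> a (d a))" by (simp add: an[of "d _"] sum_negf)
  finally show ?thesis by linarith
qed

lemma trace_g: "(\<Sum>a\<in>Basis. g a (d a)) = real DIM('v)"
  by (simp add: g_sym[of _ "d _"])


abbreviation h where "h \<equiv> hmap \<xi> \<eta>"

lemma h_phi[simp]: "h (\<phi> X) = \<phi> X" by (simp add: hmap_def)
lemma phi_h[simp]: "\<phi> (h X) = \<phi> X" by (simp add: hmap_def)
lemma h_h[simp]: "h (h X) = h X" by (simp add: hmap_def)
lemma eta_h[simp]: "\<eta> (h X) = 0" by (simp add: hmap_def)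
lemma h_xi[simp]: "h \<xi> = 0" by (simp add: hmap_def)
lemma lin_h: "linear h" by (rule linearI) (simp_all add: hmap_def scaleR_add_left scaleR_diff_right)

definition tri :: "'v tensor3 \<Rightarrow> bool" where
  "tri F \<longleftrightarrow> (\<forall>Y Z. linear (\<lambda>X. F X Y Z)) \<and> (\<forall>X Z. linear (\<lambda>Y. F X Y Z)) \<and> (\<forall>X Y. linear (\<lambda>Z. F X Y Z))"

definition W1c :: "'v tensor3 \<Rightarrow> bool" where
  "W1c F \<longleftrightarrow> tri F \<and> (\<forall>X Y Z. F X Y Z = F (h X) (h Y) (h Z)) \<and> (\<forall>X Y Z. F X Y Z = - F X Z Y)
     \<and> (\<forall>X Y Z. F X (\<phi> Y) Z = F X Y (\<phi> Z))"

lemma tri1: "tri F \<Longrightarrow> linear (\<lambda>X. F X Y Z)" by (simp add: tri_def)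
lemma tri2: "tri F \<Longrightarrow> linear (\<lambda>Y. F X Y Z)" by (simp add: tri_def)
lemma tri3: "tri F \<Longrightarrow> linear (\<lambda>Z. F X Y Z)" by (simp add: tri_def)

lemma W1c_tri: "W1c F \<Longrightarrow> tri F" by (simp add: W1c_def)
lemma W1c_h: "W1c F \<Longrightarrow> F X Y Z = F (h X) (h Y) (h Z)" unfolding W1c_def by blast
lemma W1c_skew: "W1c F \<Longrightarrow> F X Y Z = - F X Z Y" unfolding W1c_def by blast
lemma W1c_phi: "W1c F \<Longrightarrow> F X (\<phi> Y) Z = F X Y (\<phi> Z)" unfolding W1c_def by blast

lemma W1c_xi3: "W1c F \<Longrightarrow> F X Y \<xi> = 0"
  using W1c_h[of F X Y \<xi>] linear_0[OF tri3[OF W1c_tri]] by simp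
lemma W1c_xi1: "W1c F \<Longrightarrow> F \<xi> Y Z = 0"
  using W1c_h[of F \<xi> Y Z] linear_0[OF tri1[OF W1c_tri]] by simp

lemma Fspace_W1c: "F \<in> W1 \<phi> \<xi> \<eta> g \<Longrightarrow> W1c F"
proof -
  assume "F \<in> W1 \<phi> \<xi> \<eta> g"
  then obtain A A\<xi> where A: "bilinear A" and L: "linear A\<xi>" and e0: "\<forall>X. \<eta> (A\<xi> X) = 0"
    and sk: "\<forall>X Y W. \<eta> Y = 0 \<longrightarrow> \<eta> W = 0 \<longrightarrow> g (A Y X) W = - g (A W X) Y"
    and ph: "\<forall>X Y. \<eta> Y = 0 \<longrightarrow> A (\<phi> Y) X = - \<phi> (A Y X) - g (A\<xi> X) Y *\<^sub>R \<xi>"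
    and F: "F = (\<lambda>X Y Z. g (A (h Y) X) Z + \<eta> Y * g (A\<xi> X) (\<phi> Z))"
    and hi: "\<forall>X Y Z. F X Y Z = F (h X) (h Y) (h Z)"
    unfolding W1_def Fspace_def by blast
  note As = bilinear_ladd[OF A] bilinear_radd[OF A] bilinear_lmul[OF A] bilinear_rmul[OF A]
  note Ls = linear_add[OF L] linear_scale[OF L]
  note hs = linear_add[OF lin_h] linear_scale[OF lin_h]
  have tri: "tri F" unfolding tri_def F
    by (intro conjI allI linearI) (simp_all add: As Ls hs algebra_simps)
  have F': "F X Y Z = g (A (h Y) (h X)) (h Z)" for X Y Z
  proof -
    have "F X Y Z = F (h X) (h Y) (h Z)" by (rule hi[rule_format])
    also have "\<dots> = g (A (h Y) (h X)) (h Z)" by (simp add: F)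
    finally show ?thesis .
  qed
  have skew: "F X Y Z = - F X Z Y" for X Y Z
  proof -
    have "g (A (h Y) (h X)) (h Z) = - g (A (h Z) (h X)) (h Y)" by (rule sk[rule_format, OF eta_h eta_h])
    then show ?thesis using F'[of X Y Z] F'[of X Z Y] by simp
  qed
  have phs: "F X (\<phi> Y) Z = F X Y (\<phi> Z)" for X Y Z
  proof -
    have eq: "A (\<phi> (h Y)) (h X) = - \<phi> (A (h Y) (h X)) - g (A\<xi> (h X)) (h Y) *\<^sub>R \<xi>"
      by (rule ph[rule_format, OF eta_h])
    have "F X (\<phi> Y) Z = g (A (\<phi> (h Y)) (h X)) (h Z)" using F' by simp
    also have "\<dots> = g (A (h Y) (h X)) (\<phi> Z)"
      by (simp only: eq) (simp add: hmap_def[of _ _ Z])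
    also have "\<dots> = F X Y (\<phi> Z)" using F' by simp
    finally show ?thesis .
  qed
  show "W1c F" unfolding W1c_def
  proof (intro conjI)
    show "tri F" by (rule tri)
    show "\<forall>X Y Z. F X Y Z = F (h X) (h Y) (h Z)" by (rule hi)
    show "\<forall>X Y Z. F X Y Z = - F X Z Y" using skew by blast
    show "\<forall>X Y Z. F X (\<phi> Y) Z = F X Y (\<phi> Z)" using phs by blast
  qed
qed

definition Aof :: "'v tensor3 \<Rightarrow> 'v \<Rightarrow> 'v \<Rightarrow> 'v" where
  "Aof F Y X = (\<Sum>a\<in>Basis. F X Y a *\<^sub>R d a)"

lemma g_Aof: "tri F \<Longrightarrow> g (Aof F Y X) Z = F X Y Z"
proof -
  assume T: "tri F"
  have "g (Aof F Y X) Z = (\<Sum>a\<in>Basis. F X Y a * (Z \<bullet> a))"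
    unfolding Aof_def by (simp add: linear_sum[OF lin_gl] linear_scale[OF lin_gl])
  also have "\<dots> = (\<Sum>a\<in>Basis. (Z \<bullet> a) * F X Y a)" by (simp add: mult.commute)
  also have "\<dots> = F X Y Z" by (rule contr[OF tri3[OF T]])
  finally show ?thesis .
qed

lemma W1c_W1: "W1c F \<Longrightarrow> F \<in> W1 \<phi> \<xi> \<eta> g"
proof -
  assume W: "W1c F"
  note T = W1c_tri[OF W]
  have bil: "bilinear (Aof F)" unfolding bilinear_def Aof_def
    by (intro conjI allI linearI)
       (simp_all add: linear_add[OF tri1[OF T]] linear_scale[OF tri1[OF T]]
         linear_add[OF tri2[OF T]] linear_scale[OF tri2[OF T]] scaleR_add_left sum.distrib scaleR_sum_right)
  have lin0: "linear (\<lambda>X::'v. 0::'v)" by (rule linearI) simp_all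
  have sk: "\<forall>X Y W. \<eta> Y = 0 \<longrightarrow> \<eta> W = 0 \<longrightarrow> g (Aof F Y X) W = - g (Aof F W X) Y"
  proof (intro allI impI)
    fix X Y W :: 'v
    have "F X Y W = - F X W Y" by (rule W1c_skew[OF W])
    then show "g (Aof F Y X) W = - g (Aof F W X) Y" by (simp add: g_Aof[OF T])
  qed
  have ph: "\<forall>X Y. \<eta> Y = 0 \<longrightarrow> Aof F (\<phi> Y) X = - \<phi> (Aof F Y X) - g ((\<lambda>X. 0) X) Y *\<^sub>R \<xi>"
  proof (intro allI impI)
    fix X Y :: 'v
    show "Aof F (\<phi> Y) X = - \<phi> (Aof F Y X) - g ((\<lambda>X. 0) X) Y *\<^sub>R \<xi>"
      by (rule g_ext) (simp add: g_Aof[OF T] W1c_phi[OF W])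
  qed
  have et: "\<forall>X Y. \<eta> Y = 0 \<longrightarrow> \<eta> (Aof F Y X) = - g ((\<lambda>X. 0) X) (\<phi> Y)"
  proof (intro allI impI)
    fix X Y :: 'v
    have "\<eta> (Aof F Y X) = g (Aof F Y X) \<xi>" by simp
    also have "\<dots> = 0" by (subst g_Aof[OF T]) (rule W1c_xi3[OF W])
    finally show "\<eta> (Aof F Y X) = - g ((\<lambda>X. 0) X) (\<phi> Y)" by simp
  qed
  have Feq: "F = (\<lambda>X Y Z. g (Aof F (h Y) X) Z + \<eta> Y * g ((\<lambda>X. 0) X) (\<phi> Z))"
  proof (intro ext)
    fix X Y Z
    have "F X (h Y) Z = F X Y Z" using W1c_h[OF W, of X "h Y" Z] W1c_h[OF W, of X Y Z] by simp
    then show "F X Y Z = g (Aof F (h Y) X) Z + \<eta> Y * g ((\<lambda>X. 0) X) (\<phi> Z)"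
      by (simp add: g_Aof[OF T])
  qed
  have "F \<in> Fspace \<phi> \<xi> \<eta> g" unfolding Fspace_def
    by (intro CollectI exI[of _ "Aof F"] exI[of _ "\<lambda>X. 0"] conjI bil lin0 sk ph et Feq) simp
  moreover have "\<forall>X Y Z. F X Y Z = F (h X) (h Y) (h Z)" using W1c_h[OF W] by blast
  ultimately show ?thesis unfolding W1_def mem_Collect_eq by (rule conjI)
qed

lemma W1_iff: "F \<in> W1 \<phi> \<xi> \<eta> g \<longleftrightarrow> W1c F"
  using W1c_W1 Fspace_W1c by blast


definition anti :: "'v tensor3 \<Rightarrow> bool" where
  "anti F \<longleftrightarrow> (\<forall>X Y Z. F (\<phi> X) Y (\<phi> Z) = - F X Y Z)"
definition symm :: "'v tensor3 \<Rightarrow> bool" where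
  "symm F \<longleftrightarrow> (\<forall>X Y Z. F (\<phi> X) Y (\<phi> Z) = F X Y Z)"

lemma antiD: "anti F \<Longrightarrow> F (\<phi> X) Y (\<phi> Z) = - F X Y Z" unfolding anti_def by blast
lemma symmD: "symm F \<Longrightarrow> F (\<phi> X) Y (\<phi> Z) = F X Y Z" unfolding symm_def by blast

lemma W1c_I:
  assumes "tri F" "\<And>X Y Z. F X Y Z = F (h X) (h Y) (h Z)" "\<And>X Y Z. F X Y Z = - F X Z Y"
    "\<And>X Y Z. F X (\<phi> Y) Z = F X Y (\<phi> Z)"
  shows "W1c F"
  unfolding W1c_def using assms by blast

lemma tri_I:
  assumes "\<And>Y Z. linear (\<lambda>X. F X Y Z)" "\<And>X Z. linear (\<lambda>Y. F X Y Z)" "\<And>X Y. linear (\<lambda>Z. F X Y Z)"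
  shows "tri F"
  unfolding tri_def using assms by blast

lemma lin_comb: "linear (f::'v\<Rightarrow>real) \<Longrightarrow> linear k \<Longrightarrow> linear (\<lambda>x. a * f x + b * k x)"
  by (rule linearI) (simp_all add: linear_add linear_scale algebra_simps)

lemma lin_compose': "linear (f::'v\<Rightarrow>real) \<Longrightarrow> linear (\<lambda>x. f (\<phi> x))"
  using linear_compose[OF lin_phi, of f] by (simp add: o_def)

lemma Fhh: "W1c F \<Longrightarrow> F (X - \<eta> X *\<^sub>R \<xi>) Y (Z - \<eta> Z *\<^sub>R \<xi>) = F X Y Z"
proof -
  assume W: "W1c F"
  have "F (h X) Y (h Z) = F (h (h X)) (h Y) (h (h Z))" by (rule W1c_h[OF W])
  also have "\<dots> = F X Y Z" using W1c_h[OF W, of X Y Z] by simp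
  finally show ?thesis by (simp add: hmap_def)
qed

lemma W1c_comb:
  assumes F: "W1c F" and G: "W1c G"
  shows "W1c (\<lambda>X Y Z. a * F X Y Z + b * G X Y Z)"
proof (rule W1c_I)
  note TF = W1c_tri[OF F] and TG = W1c_tri[OF G]
  show "tri (\<lambda>X Y Z. a * F X Y Z + b * G X Y Z)"
    by (rule tri_I; rule lin_comb; (rule tri1[OF TF] tri2[OF TF] tri3[OF TF] tri1[OF TG] tri2[OF TG] tri3[OF TG]))
  fix X Y Z
  show "a * F X Y Z + b * G X Y Z = a * F (h X) (h Y) (h Z) + b * G (h X) (h Y) (h Z)"
    using W1c_h[OF F, of X Y Z] W1c_h[OF G, of X Y Z] by simp
  show "a * F X Y Z + b * G X Y Z = - (a * F X Z Y + b * G X Z Y)"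
    using W1c_skew[OF F, of X Y Z] W1c_skew[OF G, of X Y Z] by simp
  show "a * F X (\<phi> Y) Z + b * G X (\<phi> Y) Z = a * F X Y (\<phi> Z) + b * G X Y (\<phi> Z)"
    using W1c_phi[OF F, of X Y Z] W1c_phi[OF G, of X Y Z] by simp
qed

lemma W1c_Fphi:
  assumes F: "W1c F"
  shows "W1c (\<lambda>X Y Z. F (\<phi> X) Y (\<phi> Z))"
proof (rule W1c_I)
  note TF = W1c_tri[OF F]
  show "tri (\<lambda>X Y Z. F (\<phi> X) Y (\<phi> Z))"
    apply (rule tri_I)
      apply (rule lin_compose'[of "\<lambda>X. F X _ _", OF tri1[OF TF]])
     apply (rule tri2[OF TF])
    apply (rule lin_compose'[of "\<lambda>Z. F _ _ Z", OF tri3[OF TF]])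
    done
  fix X Y Z
  have "F (\<phi> X) Y (\<phi> Z) = F (h (\<phi> X)) (h Y) (h (\<phi> Z))" by (rule W1c_h[OF F])
  then show "F (\<phi> X) Y (\<phi> Z) = F (\<phi> (h X)) (h Y) (\<phi> (h Z))" by (simp only: h_phi phi_h)
  have "F (\<phi> X) Y (\<phi> Z) = - F (\<phi> X) (\<phi> Z) Y" by (rule W1c_skew[OF F])
  also have "\<dots> = - F (\<phi> X) Z (\<phi> Y)" by (simp add: W1c_phi[OF F])
  finally show "F (\<phi> X) Y (\<phi> Z) = - F (\<phi> X) Z (\<phi> Y)" .
  show "F (\<phi> X) (\<phi> Y) (\<phi> Z) = F (\<phi> X) Y (\<phi> (\<phi> Z))"
    by (rule W1c_phi[OF F])
qed

lemma m1_eq: "m1 \<phi> F = (\<lambda>X Y Z. (1/2) * F X Y Z + (-1/2) * F (\<phi> X) Y (\<phi> Z))"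
  unfolding m1_def by (intro ext) (simp add: algebra_simps)
lemma m2_eq: "m2 \<phi> F = (\<lambda>X Y Z. (1/2) * F X Y Z + (1/2) * F (\<phi> X) Y (\<phi> Z))"
  unfolding m2_def by (intro ext) (simp add: algebra_simps)

lemma W1c_m1: "W1c F \<Longrightarrow> W1c (m1 \<phi> F)"
  unfolding m1_eq by (intro W1c_comb W1c_Fphi)
lemma W1c_m2: "W1c F \<Longrightarrow> W1c (m2 \<phi> F)"
  unfolding m2_eq by (intro W1c_comb W1c_Fphi)

lemma anti_m1: "W1c F \<Longrightarrow> anti (m1 \<phi> F)"
  unfolding anti_def m1_def by (simp add: Fhh field_simps)
lemma symm_m2: "W1c F \<Longrightarrow> symm (m2 \<phi> F)"
  unfolding symm_def m2_def by (simp add: Fhh field_simps)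

lemma m1_anti: "anti F \<Longrightarrow> m1 \<phi> F = F"
  unfolding m1_def by (intro ext) (simp add: antiD)
lemma m2_anti: "anti F \<Longrightarrow> m2 \<phi> F = (\<lambda>X Y Z. 0)"
  unfolding m2_def by (intro ext) (simp add: antiD)
lemma m1_symm: "symm F \<Longrightarrow> m1 \<phi> F = (\<lambda>X Y Z. 0)"
  unfolding m1_def by (intro ext) (simp add: symmD)
lemma m2_symm: "symm F \<Longrightarrow> m2 \<phi> F = F"
  unfolding m2_def by (intro ext) (simp add: symmD)

lemma W11_iff: "F \<in> W11 \<phi> \<xi> \<eta> g \<longleftrightarrow> W1c F \<and> anti F"
proof
  assume "F \<in> W11 \<phi> \<xi> \<eta> g"
  then obtain G where "G \<in> W1 \<phi> \<xi> \<eta> g" and FG: "F = m1 \<phi> G" unfolding W11_def by blast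
  then have G: "W1c G" "F = m1 \<phi> G" using W1_iff by blast+
  then show "W1c F \<and> anti F" using W1c_m1 anti_m1 by blast
next
  assume "W1c F \<and> anti F"
  then have "F = m1 \<phi> F" "F \<in> W1 \<phi> \<xi> \<eta> g" using m1_anti W1_iff by auto
  then show "F \<in> W11 \<phi> \<xi> \<eta> g" unfolding W11_def by (rule image_eqI)
qed

lemma F3_iff: "F \<in> F3 \<phi> \<xi> \<eta> g \<longleftrightarrow> W1c F \<and> symm F"
proof
  assume "F \<in> F3 \<phi> \<xi> \<eta> g"
  then obtain G where "G \<in> W1 \<phi> \<xi> \<eta> g" and FG: "F = m2 \<phi> G" unfolding F3_def by blast
  then have G: "W1c G" "F = m2 \<phi> G" using W1_iff by blast+
  then show "W1c F \<and> symm F" using W1c_m2 symm_m2 by blast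
next
  assume "W1c F \<and> symm F"
  then have "F = m2 \<phi> F" "F \<in> W1 \<phi> \<xi> \<eta> g" using m2_symm W1_iff by auto
  then show "F \<in> F3 \<phi> \<xi> \<eta> g" unfolding F3_def by (rule image_eqI)
qed


lemma theta_eq: "tri F \<Longrightarrow> theta g F X = (\<Sum>a\<in>Basis. F a (d a) X)"
proof -
  assume T: "tri F"
  show ?thesis unfolding theta_def
  proof (rule sum.cong[OF refl])
    fix a :: 'v assume a: "a \<in> Basis"
    have "(\<Sum>b\<in>Basis. ginv g a b * F a b X) = (\<Sum>b\<in>Basis. (d a \<bullet> b) * F a b X)"
      by (rule sum.cong[OF refl]) (simp add: ginv_eq a)
    also have "\<dots> = F a (d a) X" by (rule contr[OF tri2[OF T]])
    finally show "(\<Sum>b\<in>Basis. ginv g a b * F a b X) = F a (d a) X" .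
  qed
qed

lemma lin_theta: "tri F \<Longrightarrow> linear (theta g F)"
proof -
  assume T: "tri F"
  have "linear (\<lambda>X. \<Sum>a\<in>Basis. F a (d a) X)"
    by (rule linear_compose_sum) (simp add: tri3[OF T])
  moreover have "theta g F = (\<lambda>X. \<Sum>a\<in>Basis. F a (d a) X)" by (rule ext) (rule theta_eq[OF T])
  ultimately show ?thesis by simp
qed

lemma theta_xi: "W1c F \<Longrightarrow> theta g F \<xi> = 0"
  by (simp add: theta_eq[OF W1c_tri] W1c_xi3)

lemma theta_comb: "theta g (\<lambda>X Y Z. F X Y Z - c * G X Y Z) W = theta g F W - c * theta g G W"
  unfolding theta_def by (simp add: right_diff_distrib sum_subtractf sum_distrib_left mult.left_commute)

lemma theta_addf: "theta g (\<lambda>X Y Z. F X Y Z + G X Y Z) W = theta g F W + theta g G W"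
  unfolding theta_def by (simp add: distrib_left sum.distrib)

definition psi :: "('v \<Rightarrow> real) \<Rightarrow> 'v tensor3" where
  "psi \<theta> X Y Z = g X (\<phi> Y) * \<theta> (\<phi> Z) - g X (\<phi> Z) * \<theta> (\<phi> Y) - g (\<phi> X) (\<phi> Y) * \<theta> Z + g (\<phi> X) (\<phi> Z) * \<theta> Y"

definition cst :: real where "cst = 1 / (2 * (real n - 1))"

lemma cst_eq: "cst * (2 * (real n - 1)) = 1"
  using n2 unfolding cst_def by simp

lemma m3_eq: "m3 n \<phi> g F = (\<lambda>X Y Z. F X Y Z - cst * psi (theta g F) X Y Z)"
  unfolding m3_def psi_def cst_def by (rule refl)

lemma W1c_psi:
  assumes th: "linear \<theta>" and tx: "\<theta> \<xi> = 0"
  shows "W1c (psi \<theta>)"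
proof (rule W1c_I)
  note ths = linear_add[OF th] linear_diff[OF th] linear_scale[OF th] linear_neg[OF th] tx
  show "tri (psi \<theta>)"
    by (intro tri_I linearI) (simp_all add: psi_def ths algebra_simps)
  fix X Y Z
  show "psi \<theta> X Y Z = psi \<theta> (h X) (h Y) (h Z)"
    by (simp add: psi_def hmap_def ths)
  show "psi \<theta> X Y Z = - psi \<theta> X Z Y"
    by (simp add: psi_def algebra_simps)
  show "psi \<theta> X (\<phi> Y) Z = psi \<theta> X Y (\<phi> Z)"
    by (simp add: psi_def ths algebra_simps)
qed

lemma anti_psi:
  assumes th: "linear \<theta>" and tx: "\<theta> \<xi> = 0"
  shows "anti (psi \<theta>)"
  unfolding anti_def
proof (intro allI)
  note ths = linear_add[OF th] linear_diff[OF th] linear_scale[OF th] linear_neg[OF th] tx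
  fix X Y Z
  show "psi \<theta> (\<phi> X) Y (\<phi> Z) = - psi \<theta> X Y Z"
    by (simp add: psi_def ths algebra_simps)
qed


lemma lin_gphi: "linear (\<lambda>y. g x (\<phi> y))"
  using lin_compose'[OF lin_gr[of x]] .

lemma S1: "(\<Sum>a\<in>Basis. g a (\<phi> (d a))) = 0"
proof (rule Kanti[of "\<lambda>x y. g x (\<phi> y)"])
  show "\<And>y. linear (\<lambda>x. g x (\<phi> y))" by (rule lin_gl)
  show "\<And>x. linear (\<lambda>y. g x (\<phi> y))" by (rule lin_gphi)
  fix x y
  have "g y (\<phi> x) = g (\<phi> x) y" by (rule g_sym)
  then show "g x (\<phi> y) = - g y (\<phi> x)" by simp
qed

lemma S2: "linear \<theta> \<Longrightarrow> \<theta> \<xi> = 0 \<Longrightarrow> (\<Sum>a\<in>Basis. g a (\<phi> Z) * \<theta> (\<phi> (d a))) = \<theta> Z"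
proof -
  assume th: "linear \<theta>" and tx: "\<theta> \<xi> = 0"
  have "(\<Sum>a\<in>Basis. g a (\<phi> Z) * \<theta> (\<phi> (d a))) = \<theta> (\<phi> (raise (\<lambda>x. g x (\<phi> Z))))"
    by (rule K1[OF lin_gl lin_compose'[OF th]])
  also have "\<dots> = \<theta> Z" by (simp add: linear_diff[OF th] linear_scale[OF th] tx)
  finally show ?thesis .
qed

lemma S3: "(\<Sum>a\<in>Basis. g (\<phi> a) (\<phi> (d a))) = 1 - real DIM('v)"
proof -
  have "(\<Sum>a\<in>Basis. g (\<phi> a) (\<phi> (d a))) = (\<Sum>a\<in>Basis. - g a (d a) + \<eta> a * \<eta> (d a))"
    by (rule sum.cong[OF refl]) (rule g_phiphi)
  also have "\<dots> = (\<Sum>a\<in>Basis. \<eta> a * \<eta> (d a)) - (\<Sum>a\<in>Basis. g a (d a))"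
    by (simp only: sum.distrib sum_negf)
  also have "(\<Sum>a\<in>Basis. \<eta> a * \<eta> (d a)) = \<eta> (raise \<eta>)" by (rule K1[OF lin_eta lin_eta])
  finally show ?thesis by (simp add: trace_g)
qed

lemma S4: "linear \<theta> \<Longrightarrow> \<theta> \<xi> = 0 \<Longrightarrow> (\<Sum>a\<in>Basis. g (\<phi> a) (\<phi> Z) * \<theta> (d a)) = - \<theta> Z"
proof -
  assume th: "linear \<theta>" and tx: "\<theta> \<xi> = 0"
  have "(\<Sum>a\<in>Basis. g (\<phi> a) (\<phi> Z) * \<theta> (d a)) = (\<Sum>a\<in>Basis. g a (- \<phi> (\<phi> Z)) * \<theta> (d a))"
    by (rule sum.cong[OF refl]) (simp only: g_phi_l bilinear_rneg[OF bil_g])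
  also have "\<dots> = \<theta> (raise (\<lambda>x. g x (- \<phi> (\<phi> Z))))" by (rule K1[OF lin_gl th])
  also have "\<dots> = \<theta> (- \<phi> (\<phi> Z))" by (simp only: raise_gl)
  also have "\<dots> = - \<theta> Z" by (simp add: linear_neg[OF th] linear_diff[OF th] linear_scale[OF th] tx)
  finally show ?thesis .
qed

lemma theta_psi:
  assumes th: "linear \<theta>" and tx: "\<theta> \<xi> = 0"
  shows "theta g (psi \<theta>) Z = 2 * (real n - 1) * \<theta> Z"
proof -
  have T: "tri (psi \<theta>)" using W1c_psi[OF th tx] by (rule W1c_tri)
  have "theta g (psi \<theta>) Z = (\<Sum>a\<in>Basis. g a (\<phi> (d a))) * \<theta> (\<phi> Z)
      - (\<Sum>a\<in>Basis. g a (\<phi> Z) * \<theta> (\<phi> (d a))) - (\<Sum>a\<in>Basis. g (\<phi> a) (\<phi> (d a))) * \<theta> Z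
      + (\<Sum>a\<in>Basis. g (\<phi> a) (\<phi> Z) * \<theta> (d a))"
    by (simp only: theta_eq[OF T] psi_def sum_subtractf sum.distrib sum_distrib_right)
  also have "\<dots> = 2 * (real n - 1) * \<theta> Z"
    by (simp only: S1 S2[OF th tx] S3 S4[OF th tx] dimV) (simp add: algebra_simps)
  finally show ?thesis .
qed

lemma theta_m3: "W1c F \<Longrightarrow> theta g (m3 n \<phi> g F) W = 0"
proof -
  assume W: "W1c F"
  have "theta g (m3 n \<phi> g F) W = theta g F W - cst * theta g (psi (theta g F)) W"
    unfolding m3_eq by (rule theta_comb)
  also have "\<dots> = theta g F W - cst * (2 * (real n - 1)) * theta g F W"
    by (simp add: theta_psi[OF lin_theta[OF W1c_tri[OF W]] theta_xi[OF W]])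
  also have "\<dots> = 0" by (simp only: cst_eq mult_1 diff_self)
  finally show ?thesis .
qed

lemma psi0: "psi (\<lambda>_. 0) = (\<lambda>X Y Z. 0)"
  by (intro ext) (simp add: psi_def)

lemma m3_m3: "W1c F \<Longrightarrow> m3 n \<phi> g (m3 n \<phi> g F) = m3 n \<phi> g F"
proof -
  assume W: "W1c F"
  have "theta g (m3 n \<phi> g F) = (\<lambda>_. 0)" by (rule ext) (rule theta_m3[OF W])
  then show ?thesis by (subst (1) m3_eq) (simp add: psi0)
qed

lemma m3_comb: "m3 n \<phi> g F = (\<lambda>X Y Z. 1 * F X Y Z + (- cst) * psi (theta g F) X Y Z)"
  unfolding m3_eq by (intro ext) simp

lemma W1c_m3: "W1c F \<Longrightarrow> W1c (m3 n \<phi> g F)"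
  unfolding m3_comb
  by (intro W1c_comb W1c_psi lin_theta W1c_tri theta_xi)

lemma anti_comb: "anti F \<Longrightarrow> anti G \<Longrightarrow> anti (\<lambda>X Y Z. a * F X Y Z + b * G X Y Z)"
  unfolding anti_def by simp

lemma anti_m3: "W1c F \<Longrightarrow> anti F \<Longrightarrow> anti (m3 n \<phi> g F)"
  unfolding m3_comb
  by (intro anti_comb anti_psi lin_theta W1c_tri theta_xi)

lemma m3_add: "m3 n \<phi> g (\<lambda>X Y Z. P X Y Z + Q X Y Z) = (\<lambda>X Y Z. m3 n \<phi> g P X Y Z + m3 n \<phi> g Q X Y Z)"
  unfolding m3_def theta_addf by (intro ext) (simp add: algebra_simps)


section \<open>Inner product\<close>

lemma H3: "(\<Sum>a\<in>A. \<Sum>q\<in>B. \<Sum>r\<in>C. \<Sum>s\<in>D. f a q r s) = (\<Sum>q\<in>B. \<Sum>r\<in>C. \<Sum>s\<in>D. \<Sum>a\<in>A. f a q r s)"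
proof -
  have "(\<Sum>a\<in>A. \<Sum>q\<in>B. \<Sum>r\<in>C. \<Sum>s\<in>D. f a q r s) = (\<Sum>q\<in>B. \<Sum>a\<in>A. \<Sum>r\<in>C. \<Sum>s\<in>D. f a q r s)"
    by (rule sum.swap)
  also have "\<dots> = (\<Sum>q\<in>B. \<Sum>r\<in>C. \<Sum>a\<in>A. \<Sum>s\<in>D. f a q r s)"
    by (rule sum.cong[OF refl]) (rule sum.swap)
  also have "\<dots> = (\<Sum>q\<in>B. \<Sum>r\<in>C. \<Sum>s\<in>D. \<Sum>a\<in>A. f a q r s)"
    by (rule sum.cong[OF refl], rule sum.cong[OF refl]) (rule sum.swap)
  finally show ?thesis .
qed

lemma swap6: "(\<Sum>a\<in>A. \<Sum>b\<in>A. \<Sum>c\<in>A. \<Sum>q\<in>A. \<Sum>r\<in>A. \<Sum>s\<in>A. f a b c q r s)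
  = (\<Sum>q\<in>A. \<Sum>r\<in>A. \<Sum>s\<in>A. \<Sum>a\<in>A. \<Sum>b\<in>A. \<Sum>c\<in>A. f a b c q r s)"
proof -
  have "(\<Sum>a\<in>A. \<Sum>b\<in>A. \<Sum>c\<in>A. \<Sum>q\<in>A. \<Sum>r\<in>A. \<Sum>s\<in>A. f a b c q r s)
     = (\<Sum>a\<in>A. \<Sum>b\<in>A. \<Sum>q\<in>A. \<Sum>r\<in>A. \<Sum>s\<in>A. \<Sum>c\<in>A. f a b c q r s)"
    by (rule sum.cong[OF refl], rule sum.cong[OF refl]) (rule H3)
  also have "\<dots> = (\<Sum>a\<in>A. \<Sum>q\<in>A. \<Sum>r\<in>A. \<Sum>s\<in>A. \<Sum>b\<in>A. \<Sum>c\<in>A. f a b c q r s)"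
    by (rule sum.cong[OF refl]) (rule H3)
  also have "\<dots> = (\<Sum>q\<in>A. \<Sum>r\<in>A. \<Sum>s\<in>A. \<Sum>a\<in>A. \<Sum>b\<in>A. \<Sum>c\<in>A. f a b c q r s)"
    by (rule H3)
  finally show ?thesis .
qed

lemma ginv_sym: "a \<in> Basis \<Longrightarrow> b \<in> Basis \<Longrightarrow> ginv g a b = ginv g b a"
  by (simp add: ginv_eq d_sym)

lemma tip_sym: "tensor_ip g P Q = tensor_ip g Q P"
proof -
  have "tensor_ip g P Q = (\<Sum>q\<in>Basis. \<Sum>r\<in>Basis. \<Sum>s\<in>Basis. \<Sum>a\<in>Basis. \<Sum>b\<in>Basis. \<Sum>c\<in>Basis.
        ginv g a q * ginv g b r * ginv g c s * P a b c * Q q r s)"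
    unfolding tensor_ip_def by (rule swap6)
  also have "\<dots> = tensor_ip g Q P"
    unfolding tensor_ip_def
    by (intro sum.cong refl) (simp add: ginv_sym[of _ _] mult_ac)
  finally show ?thesis .
qed

lemma tip_eq:
  assumes T: "tri Q"
  shows "tensor_ip g P Q = (\<Sum>a\<in>Basis. \<Sum>b\<in>Basis. \<Sum>c\<in>Basis. P a b c * Q (d a) (d b) (d c))"
  unfolding tensor_ip_def
proof (intro sum.cong refl)
  fix a b c :: 'v assume a: "a \<in> Basis" and b: "b \<in> Basis" and c: "c \<in> Basis"
  have "P a b c * Q (d a) (d b) (d c) = P a b c *
      (\<Sum>q\<in>Basis. (d a \<bullet> q) * (\<Sum>r\<in>Basis. (d b \<bullet> r) * (\<Sum>s\<in>Basis. (d c \<bullet> s) * Q q r s)))"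
    by (simp add: contr[OF tri1[OF T]] contr[OF tri2[OF T]] contr[OF tri3[OF T]])
  also have "\<dots> = (\<Sum>q\<in>Basis. \<Sum>r\<in>Basis. \<Sum>s\<in>Basis. ginv g a q * ginv g b r * ginv g c s * P a b c * Q q r s)"
    by (simp add: sum_distrib_left ginv_eq a b c mult_ac)
  finally show "(\<Sum>q\<in>Basis. \<Sum>r\<in>Basis. \<Sum>s\<in>Basis. ginv g a q * ginv g b r * ginv g c s * P a b c * Q q r s)
      = P a b c * Q (d a) (d b) (d c)" by simp
qed

lemma lin_cmul: "linear (f::'v\<Rightarrow>real) \<Longrightarrow> linear (\<lambda>x. k * f x)"
  by (rule linearI) (simp_all add: linear_add linear_scale algebra_simps)
lemma lin_mulc: "linear (f::'v\<Rightarrow>real) \<Longrightarrow> linear (\<lambda>x. f x * k)"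
  by (rule linearI) (simp_all add: linear_add linear_scale algebra_simps)

lemma orth_anti_symm:
  assumes P: "W1c P" "anti P" and R: "W1c R" "symm R"
  shows "tensor_ip g P R = 0"
proof -
  note TP = W1c_tri[OF P(1)] and TR = W1c_tri[OF R(1)]
  define S where "S = (\<Sum>a\<in>Basis. \<Sum>b\<in>Basis. \<Sum>c\<in>Basis. P a b c * R (d a) (d b) (d c))"
  have "S = (\<Sum>a\<in>Basis. \<Sum>b\<in>Basis. - (\<Sum>c\<in>Basis. P (\<phi> a) b (\<phi> c) * R (\<phi> (d a)) (d b) (\<phi> (d c))))"
    unfolding S_def by (simp add: antiD[OF P(2)] symmD[OF R(2)] sum_negf)
  also have "\<dots> = (\<Sum>a\<in>Basis. \<Sum>b\<in>Basis. \<Sum>c\<in>Basis. P (\<phi> a) b c * R (\<phi> (d a)) (d b) (d c))"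
  proof (intro sum.cong refl)
    fix a b
    have "(\<Sum>c\<in>Basis. P (\<phi> a) b (\<phi> c) * R (\<phi> (d a)) (d b) (\<phi> (d c)))
        = - (\<Sum>c\<in>Basis. P (\<phi> a) b c * R (\<phi> (d a)) (d b) (d c))"
      by (rule Kphi[of "\<lambda>x y. P (\<phi> a) b x * R (\<phi> (d a)) (d b) y"])
         (simp_all add: lin_mulc lin_cmul tri3[OF TP] tri3[OF TR] W1c_xi3[OF R(1)])
    then show "- (\<Sum>c\<in>Basis. P (\<phi> a) b (\<phi> c) * R (\<phi> (d a)) (d b) (\<phi> (d c)))
        = (\<Sum>c\<in>Basis. P (\<phi> a) b c * R (\<phi> (d a)) (d b) (d c))" by simp
  qed
  also have "\<dots> = (\<Sum>b\<in>Basis. \<Sum>c\<in>Basis. \<Sum>a\<in>Basis. P (\<phi> a) b c * R (\<phi> (d a)) (d b) (d c))"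
    by (subst sum.swap) (rule sum.cong[OF refl], rule sum.swap)
  also have "\<dots> = (\<Sum>b\<in>Basis. \<Sum>c\<in>Basis. - (\<Sum>a\<in>Basis. P a b c * R (d a) (d b) (d c)))"
  proof (intro sum.cong refl)
    fix b c
    show "(\<Sum>a\<in>Basis. P (\<phi> a) b c * R (\<phi> (d a)) (d b) (d c)) = - (\<Sum>a\<in>Basis. P a b c * R (d a) (d b) (d c))"
      by (rule Kphi[of "\<lambda>x y. P x b c * R y (d b) (d c)"])
         (simp_all add: lin_mulc lin_cmul tri1[OF TP] tri1[OF TR] W1c_xi1[OF R(1)])
  qed
  also have "\<dots> = - (\<Sum>b\<in>Basis. \<Sum>c\<in>Basis. \<Sum>a\<in>Basis. P a b c * R (d a) (d b) (d c))"
    by (simp add: sum_negf)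
  also have "(\<Sum>b\<in>Basis. \<Sum>c\<in>Basis. \<Sum>a\<in>Basis. P a b c * R (d a) (d b) (d c)) = S"
    unfolding S_def by (subst sum.swap) (rule sum.cong[OF refl], rule sum.swap)
  finally have "S = - S" .
  then have "S = 0" by linarith
  then show ?thesis unfolding S_def tip_eq[OF TR] .
qed


lemma Qphi0:
  assumes Q: "W1c Q" and tQ: "\<And>W. theta g Q W = 0"
  shows "(\<Sum>b\<in>Basis. Q (\<phi> b) (d b) W) = 0"
proof -
  note TQ = W1c_tri[OF Q]
  have "(\<Sum>b\<in>Basis. Q (\<phi> b) (d b) W) = (\<Sum>b\<in>Basis. Q (\<phi> b) (id (d b)) W)" by simp
  also have "\<dots> = (\<Sum>c\<in>Basis. Q c (id (raise (\<lambda>x. \<phi> x \<bullet> c))) W)"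
    by (rule K2[of "\<lambda>x y. Q x y W"]) (simp_all add: tri1[OF TQ] tri2[OF TQ] lin_phi bounded_linear_ident[THEN bounded_linear.linear])
  also have "\<dots> = (\<Sum>c\<in>Basis. - Q c (d c) (\<phi> W))"
    by (rule sum.cong[OF refl]) (simp add: raise_phi linear_neg[OF tri2[OF TQ]] W1c_phi[OF Q])
  also have "\<dots> = - theta g Q (\<phi> W)" by (simp add: theta_eq[OF TQ] sum_negf)
  finally show ?thesis by (simp add: tQ)
qed

lemma Qtheta0:
  assumes Q: "W1c Q" and tQ: "\<And>W. theta g Q W = 0"
  shows "(\<Sum>b\<in>Basis. Q b (d b) W) = 0"
  using tQ[of W] by (simp add: theta_eq[OF W1c_tri[OF Q]])

lemma psiQ_inner:
  assumes Q: "W1c Q"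
  shows "(\<Sum>a\<in>Basis. psi \<theta> a b c * Q (d a) (d b) (d c)) =
    \<theta> (\<phi> c) * Q (\<phi> b) (d b) (d c) - \<theta> (\<phi> b) * Q (\<phi> c) (d b) (d c)
    + \<theta> c * Q b (d b) (d c) - \<theta> b * Q c (d b) (d c)"
proof -
  note TQ = W1c_tri[OF Q]
  have lv: "linear (\<lambda>y. Q y (d b) (d c))" by (rule tri1[OF TQ])
  have e1: "(\<Sum>a\<in>Basis. g a W * Q (d a) (d b) (d c)) = Q W (d b) (d c)" for W
    using K1[OF lin_gl lv, of W] by simp
  have e2: "(\<Sum>a\<in>Basis. g (\<phi> a) (\<phi> W) * Q (d a) (d b) (d c)) = - Q W (d b) (d c)" for W
  proof -
    have "(\<Sum>a\<in>Basis. g (\<phi> a) (\<phi> W) * Q (d a) (d b) (d c)) = (\<Sum>a\<in>Basis. g a (- \<phi> (\<phi> W)) * Q (d a) (d b) (d c))"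
      by (rule sum.cong[OF refl]) (simp only: g_phi_l bilinear_rneg[OF bil_g])
    also have "\<dots> = Q (- \<phi> (\<phi> W)) (d b) (d c)" by (rule e1)
    also have "\<dots> = - Q W (d b) (d c)"
      by (simp add: linear_neg[OF lv] linear_diff[OF lv] linear_scale[OF lv] W1c_xi1[OF Q])
    finally show ?thesis .
  qed
  have "(\<Sum>a\<in>Basis. psi \<theta> a b c * Q (d a) (d b) (d c)) =
      (\<Sum>a\<in>Basis. g a (\<phi> b) * Q (d a) (d b) (d c)) * \<theta> (\<phi> c)
      - (\<Sum>a\<in>Basis. g a (\<phi> c) * Q (d a) (d b) (d c)) * \<theta> (\<phi> b)
      - (\<Sum>a\<in>Basis. g (\<phi> a) (\<phi> b) * Q (d a) (d b) (d c)) * \<theta> c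
      + (\<Sum>a\<in>Basis. g (\<phi> a) (\<phi> c) * Q (d a) (d b) (d c)) * \<theta> b"
    unfolding psi_def sum_distrib_right
    by (simp only: sum_subtractf[symmetric] sum.distrib[symmetric]) (rule sum.cong[OF refl], simp only: algebra_simps)
  also have "\<dots> = \<theta> (\<phi> c) * Q (\<phi> b) (d b) (d c) - \<theta> (\<phi> b) * Q (\<phi> c) (d b) (d c)
    + \<theta> c * Q b (d b) (d c) - \<theta> b * Q c (d b) (d c)"
    by (simp only: e1 e2) (simp add: algebra_simps)
  finally show ?thesis .
qed

lemma orth_psi:
  assumes Q: "W1c Q" and tQ: "\<And>W. theta g Q W = 0"
  shows "tensor_ip g (psi \<theta>) Q = 0"
proof -
  note TQ = W1c_tri[OF Q]
  have z1: "(\<Sum>b\<in>Basis. Q (\<phi> b) (d b) W) = 0" for W by (rule Qphi0[OF Q tQ])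
  have z2: "(\<Sum>b\<in>Basis. Q b (d b) W) = 0" for W by (rule Qtheta0[OF Q tQ])
  have z3: "(\<Sum>c\<in>Basis. Q (\<phi> c) W (d c)) = 0" for W
    using z1[of W] W1c_skew[OF Q, of "\<phi> _" W] by (simp add: sum_negf)
  have z4: "(\<Sum>c\<in>Basis. Q c W (d c)) = 0" for W
    using z2[of W] W1c_skew[OF Q, of _ W] by (simp add: sum_negf)
  have "tensor_ip g (psi \<theta>) Q = (\<Sum>a\<in>Basis. \<Sum>b\<in>Basis. \<Sum>c\<in>Basis. psi \<theta> a b c * Q (d a) (d b) (d c))"
    by (rule tip_eq[OF TQ])
  also have "\<dots> = (\<Sum>b\<in>Basis. \<Sum>c\<in>Basis. \<Sum>a\<in>Basis. psi \<theta> a b c * Q (d a) (d b) (d c))"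
    by (subst sum.swap) (rule sum.cong[OF refl], rule sum.swap)
  also have "\<dots> = (\<Sum>b\<in>Basis. \<Sum>c\<in>Basis. \<theta> (\<phi> c) * Q (\<phi> b) (d b) (d c))
     - (\<Sum>b\<in>Basis. \<theta> (\<phi> b) * (\<Sum>c\<in>Basis. Q (\<phi> c) (d b) (d c)))
     + (\<Sum>b\<in>Basis. \<Sum>c\<in>Basis. \<theta> c * Q b (d b) (d c))
     - (\<Sum>b\<in>Basis. \<theta> b * (\<Sum>c\<in>Basis. Q c (d b) (d c)))"
    by (simp only: psiQ_inner[OF Q] sum_subtractf sum.distrib sum_distrib_left)
  also have "(\<Sum>b\<in>Basis. \<Sum>c\<in>Basis. \<theta> (\<phi> c) * Q (\<phi> b) (d b) (d c)) = 0"
    by (subst sum.swap) (simp add: sum_distrib_left[symmetric] z1)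
  also have "(\<Sum>b\<in>Basis. \<Sum>c\<in>Basis. \<theta> c * Q b (d b) (d c)) = 0"
    by (subst sum.swap) (simp add: sum_distrib_left[symmetric] z2)
  finally show ?thesis by (simp add: z3 z4)
qed

lemma F1_char: "P \<in> F1 n \<phi> \<xi> \<eta> g \<longleftrightarrow> W1c P \<and> anti P \<and> m3 n \<phi> g P = (\<lambda>X Y Z. 0)"
  unfolding F1_def W11_iff by blast

lemma F1_psi: "P \<in> F1 n \<phi> \<xi> \<eta> g \<Longrightarrow> P = (\<lambda>X Y Z. cst * psi (theta g P) X Y Z)"
proof -
  assume "P \<in> F1 n \<phi> \<xi> \<eta> g"
  then have "m3 n \<phi> g P = (\<lambda>X Y Z. 0)" unfolding F1_char by blast
  then have "\<And>X Y Z. P X Y Z - cst * psi (theta g P) X Y Z = 0" unfolding m3_eq by metis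
  then show ?thesis by (intro ext) (simp add: algebra_simps)
qed

lemma F2_char: "Q \<in> F2 n \<phi> \<xi> \<eta> g \<Longrightarrow> W1c Q \<and> anti Q \<and> (\<forall>W. theta g Q W = 0) \<and> m3 n \<phi> g Q = Q"
proof -
  assume "Q \<in> F2 n \<phi> \<xi> \<eta> g"
  then obtain G where G: "G \<in> W11 \<phi> \<xi> \<eta> g" and QG: "Q = m3 n \<phi> g G" unfolding F2_def by blast
  from G have W: "W1c G" "anti G" unfolding W11_iff by blast+
  show ?thesis unfolding QG using W1c_m3[OF W(1)] anti_m3[OF W] theta_m3[OF W(1)] m3_m3[OF W(1)] by blast
qed

lemma orth_F1_F2: "P \<in> F1 n \<phi> \<xi> \<eta> g \<Longrightarrow> Q \<in> F2 n \<phi> \<xi> \<eta> g \<Longrightarrow> tensor_ip g P Q = 0"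
proof -
  assume P: "P \<in> F1 n \<phi> \<xi> \<eta> g" and Q: "Q \<in> F2 n \<phi> \<xi> \<eta> g"
  from F2_char[OF Q] have WQ: "W1c Q" and tQ: "\<And>W. theta g Q W = 0" by blast+
  have "tensor_ip g P Q = (\<Sum>a\<in>Basis. \<Sum>b\<in>Basis. \<Sum>c\<in>Basis. P a b c * Q (d a) (d b) (d c))"
    by (rule tip_eq[OF W1c_tri[OF WQ]])
  also have "\<dots> = cst * (\<Sum>a\<in>Basis. \<Sum>b\<in>Basis. \<Sum>c\<in>Basis. psi (theta g P) a b c * Q (d a) (d b) (d c))"
    by (subst F1_psi[OF P]) (simp add: sum_distrib_left mult.assoc)
  also have "\<dots> = cst * tensor_ip g (psi (theta g P)) Q"
    by (simp add: tip_eq[OF W1c_tri[OF WQ]])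
  also have "\<dots> = 0" by (simp add: orth_psi[OF WQ tQ])
  finally show ?thesis .
qed


section \<open>Group invariance\<close>

lemma Gprops:
  assumes a: "a \<in> Ggroup \<phi> \<xi> \<eta> g"
  shows "linear (inv a)" "\<And>x. inv a (a x) = x" "\<And>X. \<phi> (inv a X) = inv a (\<phi> X)"
    "inv a \<xi> = \<xi>" "\<And>X. \<eta> (inv a X) = \<eta> X" "\<And>X Y. g (inv a X) (inv a Y) = g X Y"
proof -
  have la: "linear a" and ba: "bij a" and c: "a \<circ> \<phi> = \<phi> \<circ> a" and ax: "a \<xi> = \<xi>"
    and ea: "\<eta> \<circ> a = \<eta>" and ga: "\<And>X Y. g (a X) (a Y) = g X Y"
    using a unfolding Ggroup_def by auto
  have inj: "inj a" using ba bij_def by blast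
  have r: "a (inv a x) = x" for x using ba by (meson bij_inv_eq_iff)
  have l: "inv a (a x) = x" for x using inj by simp
  show "linear (inv a)" using inj_linear_imp_inv_linear[OF la inj] .
  show "\<And>x. inv a (a x) = x" by (rule l)
  show "\<phi> (inv a X) = inv a (\<phi> X)" for X
  proof -
    have "a (\<phi> (inv a X)) = \<phi> X" using c r by (metis comp_apply)
    then show ?thesis using l by metis
  qed
  show "inv a \<xi> = \<xi>" using ax l by metis
  show "\<eta> (inv a X) = \<eta> X" for X using ea r by (metis comp_apply)
  show "g (inv a X) (inv a Y) = g X Y" for X Y using ga[of "inv a X" "inv a Y"] r by simp
qed

lemma lin_cL: "linear (f::'v\<Rightarrow>real) \<Longrightarrow> linear (L::'v\<Rightarrow>'v) \<Longrightarrow> linear (\<lambda>x. f (L x))"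
  using linear_compose[of L f] by (simp add: o_def)

context
  fixes L :: "'v \<Rightarrow> 'v"
  assumes lL: "linear L" and Lphi: "\<And>X. \<phi> (L X) = L (\<phi> X)" and Lxi: "L \<xi> = \<xi>"
    and Leta: "\<And>X. \<eta> (L X) = \<eta> X"
begin

lemma hL: "h (L X) = L (h X)"
  by (simp add: hmap_def Lxi Leta linear_diff[OF lL] linear_scale[OF lL])

lemma W1c_L: "W1c F \<Longrightarrow> W1c (\<lambda>X Y Z. F (L X) (L Y) (L Z))"
proof -
  assume F: "W1c F"
  note TF = W1c_tri[OF F]
  show ?thesis
  proof (rule W1c_I)
    show "tri (\<lambda>X Y Z. F (L X) (L Y) (L Z))"
      by (rule tri_I) (rule lin_cL[OF _ lL], rule tri1[OF TF] tri2[OF TF] tri3[OF TF])+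
    fix X Y Z
    show "F (L X) (L Y) (L Z) = F (L (h X)) (L (h Y)) (L (h Z))"
      using W1c_h[OF F, of "L X" "L Y" "L Z"] by (simp only: hL)
    show "F (L X) (L Y) (L Z) = - F (L X) (L Z) (L Y)" by (rule W1c_skew[OF F])
    show "F (L X) (L (\<phi> Y)) (L Z) = F (L X) (L Y) (L (\<phi> Z))"
      using W1c_phi[OF F, of "L X" "L Y" "L Z"] by (simp only: Lphi)
  qed
qed

lemma anti_L: "anti F \<Longrightarrow> anti (\<lambda>X Y Z. F (L X) (L Y) (L Z))"
  unfolding anti_def by (simp flip: Lphi)
lemma symm_L: "symm F \<Longrightarrow> symm (\<lambda>X Y Z. F (L X) (L Y) (L Z))"
  unfolding symm_def by (simp flip: Lphi)

lemma m2_L: "m2 \<phi> (\<lambda>X Y Z. F (L X) (L Y) (L Z)) = (\<lambda>X Y Z. m2 \<phi> F (L X) (L Y) (L Z))"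
  unfolding m2_def by (simp flip: Lphi)

lemma theta_L:
  assumes T: "tri F" and LL': "\<And>x. L (L' x) = x" and gL: "\<And>X Y. g (L X) (L Y) = g X Y"
  shows "theta g (\<lambda>X Y Z. F (L X) (L Y) (L Z)) W = theta g F (L W)"
proof -
  have T': "tri (\<lambda>X Y Z. F (L X) (L Y) (L Z))"
    by (rule tri_I) (rule lin_cL[OF _ lL], rule tri1[OF T] tri2[OF T] tri3[OF T])+
  have "theta g (\<lambda>X Y Z. F (L X) (L Y) (L Z)) W = (\<Sum>a\<in>Basis. F (L a) (L (d a)) (L W))"
    by (simp add: theta_eq[OF T'])
  also have "\<dots> = (\<Sum>a\<in>Basis. F a (d a) (L W))"
    by (rule KL[of "\<lambda>x y. F x y (L W)", OF _ _ lL LL' gL]) (simp_all add: tri1[OF T] tri2[OF T])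
  also have "\<dots> = theta g F (L W)" by (simp add: theta_eq[OF T])
  finally show ?thesis .
qed

lemma m3_L:
  assumes T: "tri F" and LL': "\<And>x. L (L' x) = x" and gL: "\<And>X Y. g (L X) (L Y) = g X Y"
  shows "m3 n \<phi> g (\<lambda>X Y Z. F (L X) (L Y) (L Z)) = (\<lambda>X Y Z. m3 n \<phi> g F (L X) (L Y) (L Z))"
proof -
  have th: "theta g (\<lambda>X Y Z. F (L X) (L Y) (L Z)) = (\<lambda>W. theta g F (L W))"
    by (rule ext) (rule theta_L[OF T LL' gL])
  show ?thesis unfolding m3_eq th
    by (intro ext) (simp add: psi_def Lphi gL)
qed

end

lemma act_eq: "act a P = (\<lambda>X Y Z. P (inv a X) (inv a Y) (inv a Z))"
  unfolding act_def by (rule refl)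

lemma inv_F1: "a \<in> Ggroup \<phi> \<xi> \<eta> g \<Longrightarrow> P \<in> F1 n \<phi> \<xi> \<eta> g \<Longrightarrow> act a P \<in> F1 n \<phi> \<xi> \<eta> g"
proof -
  assume a: "a \<in> Ggroup \<phi> \<xi> \<eta> g" and P: "P \<in> F1 n \<phi> \<xi> \<eta> g"
  note G = Gprops[OF a]
  from P have W: "W1c P" "anti P" "m3 n \<phi> g P = (\<lambda>X Y Z. 0)" unfolding F1_char by blast+
  have "m3 n \<phi> g (act a P) = (\<lambda>X Y Z. 0)"
    unfolding act_eq m3_L[OF G(1) G(3) G(4) G(5) W1c_tri[OF W(1)] G(2) G(6)] W(3) by (rule refl)
  then show ?thesis unfolding F1_char act_eq
    using W1c_L[OF G(1) G(3) G(4) G(5) W(1)] anti_L[OF G(1) G(3) G(4) G(5) W(2)] by blast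
qed

lemma inv_F2: "a \<in> Ggroup \<phi> \<xi> \<eta> g \<Longrightarrow> Q \<in> F2 n \<phi> \<xi> \<eta> g \<Longrightarrow> act a Q \<in> F2 n \<phi> \<xi> \<eta> g"
proof -
  assume a: "a \<in> Ggroup \<phi> \<xi> \<eta> g" and Q: "Q \<in> F2 n \<phi> \<xi> \<eta> g"
  note G = Gprops[OF a]
  obtain H where H: "H \<in> W11 \<phi> \<xi> \<eta> g" and QH: "Q = m3 n \<phi> g H" using Q unfolding F2_def by blast
  from H have W: "W1c H" "anti H" unfolding W11_iff by blast+
  have "act a Q = m3 n \<phi> g (\<lambda>X Y Z. H (inv a X) (inv a Y) (inv a Z))"
    unfolding act_eq QH m3_L[OF G(1) G(3) G(4) G(5) W1c_tri[OF W(1)] G(2) G(6)] by (rule refl)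
  moreover have "(\<lambda>X Y Z. H (inv a X) (inv a Y) (inv a Z)) \<in> W11 \<phi> \<xi> \<eta> g"
    unfolding W11_iff using W1c_L[OF G(1) G(3) G(4) G(5) W(1)] anti_L[OF G(1) G(3) G(4) G(5) W(2)] by blast
  ultimately show ?thesis unfolding F2_def by blast
qed

lemma inv_F3: "a \<in> Ggroup \<phi> \<xi> \<eta> g \<Longrightarrow> R \<in> F3 \<phi> \<xi> \<eta> g \<Longrightarrow> act a R \<in> F3 \<phi> \<xi> \<eta> g"
proof -
  assume a: "a \<in> Ggroup \<phi> \<xi> \<eta> g" and R: "R \<in> F3 \<phi> \<xi> \<eta> g"
  note G = Gprops[OF a]
  from R have W: "W1c R" "symm R" unfolding F3_iff by blast+
  show ?thesis unfolding F3_iff act_eq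
    using W1c_L[OF G(1) G(3) G(4) G(5) W(1)] symm_L[OF G(1) G(3) G(4) G(5) W(2)] by blast
qed


section \<open>Decomposition\<close>

lemma theta_scale: "theta g (\<lambda>X Y Z. c * G X Y Z) W = c * theta g G W"
  unfolding theta_def by (simp add: sum_distrib_left mult.left_commute)

lemma W1c_scale: "W1c F \<Longrightarrow> W1c (\<lambda>X Y Z. c * F X Y Z)"
proof -
  assume F: "W1c F"
  have "(\<lambda>X Y Z. c * F X Y Z) = (\<lambda>X Y Z. c * F X Y Z + 0 * F X Y Z)" by simp
  then show ?thesis using W1c_comb[OF F F, of c 0] by simp
qed

lemma anti_scale: "anti F \<Longrightarrow> anti (\<lambda>X Y Z. c * F X Y Z)"
  unfolding anti_def by simp

lemma F1_mem:
  assumes F: "W1c F"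
  shows "(\<lambda>X Y Z. F X Y Z - m3 n \<phi> g F X Y Z) \<in> F1 n \<phi> \<xi> \<eta> g"
proof -
  define th where "th = theta g F"
  have lt: "linear th" and tx: "th \<xi> = 0" unfolding th_def
    using lin_theta[OF W1c_tri[OF F]] theta_xi[OF F] by auto
  have P0: "(\<lambda>X Y Z. F X Y Z - m3 n \<phi> g F X Y Z) = (\<lambda>X Y Z. cst * psi th X Y Z)"
    unfolding m3_eq th_def by (intro ext) simp
  have tP: "theta g (\<lambda>X Y Z. cst * psi th X Y Z) = th"
  proof (rule ext)
    fix W
    have "theta g (\<lambda>X Y Z. cst * psi th X Y Z) W = cst * (2 * (real n - 1) * th W)"
      by (simp only: theta_scale theta_psi[OF lt tx])
    also have "\<dots> = th W" using cst_eq by (simp add: mult.assoc[symmetric])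
    finally show "theta g (\<lambda>X Y Z. cst * psi th X Y Z) W = th W" .
  qed
  have "m3 n \<phi> g (\<lambda>X Y Z. cst * psi th X Y Z) = (\<lambda>X Y Z. 0)"
    unfolding m3_eq tP by simp
  then show ?thesis unfolding P0 F1_char
    using W1c_scale[OF W1c_psi[OF lt tx]] anti_scale[OF anti_psi[OF lt tx]] by blast
qed

lemma decomp_unique:
  assumes P: "P \<in> F1 n \<phi> \<xi> \<eta> g" and Q: "Q \<in> F2 n \<phi> \<xi> \<eta> g" and R: "R \<in> F3 \<phi> \<xi> \<eta> g"
    and F: "F = (\<lambda>X Y Z. P X Y Z + Q X Y Z + R X Y Z)"
  shows "P = (\<lambda>X Y Z. m1 \<phi> F X Y Z - m3 n \<phi> g (m1 \<phi> F) X Y Z) \<and> Q = m3 n \<phi> g (m1 \<phi> F) \<and> R = m2 \<phi> F"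
proof -
  from P have WP: "W1c P" "anti P" "m3 n \<phi> g P = (\<lambda>X Y Z. 0)" unfolding F1_char by blast+
  from F2_char[OF Q] have WQ: "W1c Q" "anti Q" "m3 n \<phi> g Q = Q" by blast+
  from R have WR: "W1c R" "symm R" unfolding F3_iff by blast+
  have "m2 \<phi> F = (\<lambda>X Y Z. m2 \<phi> P X Y Z + m2 \<phi> Q X Y Z + m2 \<phi> R X Y Z)"
    unfolding F m2_def by (intro ext) (simp add: algebra_simps)
  then have R2: "R = m2 \<phi> F" unfolding m2_anti[OF WP(2)] m2_anti[OF WQ(2)] m2_symm[OF WR(2)] by simp
  have m1F: "m1 \<phi> F = (\<lambda>X Y Z. P X Y Z + Q X Y Z)"
  proof -
    have "m1 \<phi> F = (\<lambda>X Y Z. m1 \<phi> P X Y Z + m1 \<phi> Q X Y Z + m1 \<phi> R X Y Z)"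
      unfolding F m1_def by (intro ext) (simp add: algebra_simps)
    then show ?thesis unfolding m1_anti[OF WP(2)] m1_anti[OF WQ(2)] m1_symm[OF WR(2)] by simp
  qed
  have Q2: "m3 n \<phi> g (m1 \<phi> F) = Q"
    unfolding m1F m3_add WP(3) WQ(3) by simp
  show ?thesis unfolding Q2 using R2 by (simp add: m1F)
qed

lemma decomp:
  assumes F: "F \<in> W1 \<phi> \<xi> \<eta> g"
  shows "\<exists>!(P, Q, R). P \<in> F1 n \<phi> \<xi> \<eta> g \<and> Q \<in> F2 n \<phi> \<xi> \<eta> g \<and> R \<in> F3 \<phi> \<xi> \<eta> g \<and>
          F = (\<lambda>X Y Z. P X Y Z + Q X Y Z + R X Y Z)"
proof -
  have WF: "W1c F" using F W1_iff by blast
  define P0 where "P0 = (\<lambda>X Y Z. m1 \<phi> F X Y Z - m3 n \<phi> g (m1 \<phi> F) X Y Z)"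
  define Q0 where "Q0 = m3 n \<phi> g (m1 \<phi> F)"
  define R0 where "R0 = m2 \<phi> F"
  have m1W: "m1 \<phi> F \<in> W11 \<phi> \<xi> \<eta> g" unfolding W11_def using F by blast
  have P0: "P0 \<in> F1 n \<phi> \<xi> \<eta> g" unfolding P0_def by (rule F1_mem[OF W1c_m1[OF WF]])
  have Q0: "Q0 \<in> F2 n \<phi> \<xi> \<eta> g" unfolding Q0_def F2_def using m1W by blast
  have R0: "R0 \<in> F3 \<phi> \<xi> \<eta> g" unfolding R0_def F3_def using F by blast
  have sum: "F = (\<lambda>X Y Z. P0 X Y Z + Q0 X Y Z + R0 X Y Z)"
    unfolding P0_def Q0_def R0_def m1_def m2_def by (intro ext) (simp add: algebra_simps)
  show ?thesis
  proof (rule ex1I[of _ "(P0, Q0, R0)"])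
    show "case (P0, Q0, R0) of (P, Q, R) \<Rightarrow> P \<in> F1 n \<phi> \<xi> \<eta> g \<and> Q \<in> F2 n \<phi> \<xi> \<eta> g \<and> R \<in> F3 \<phi> \<xi> \<eta> g \<and>
          F = (\<lambda>X Y Z. P X Y Z + Q X Y Z + R X Y Z)"
      using P0 Q0 R0 sum by simp
  next
    fix y
    assume y: "case y of (P, Q, R) \<Rightarrow> P \<in> F1 n \<phi> \<xi> \<eta> g \<and> Q \<in> F2 n \<phi> \<xi> \<eta> g \<and> R \<in> F3 \<phi> \<xi> \<eta> g \<and>
          F = (\<lambda>X Y Z. P X Y Z + Q X Y Z + R X Y Z)"
    obtain P Q R where yy: "y = (P, Q, R)" by (cases y) blast
    from y have "P \<in> F1 n \<phi> \<xi> \<eta> g" "Q \<in> F2 n \<phi> \<xi> \<eta> g" "R \<in> F3 \<phi> \<xi> \<eta> g"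
      "F = (\<lambda>X Y Z. P X Y Z + Q X Y Z + R X Y Z)" unfolding yy by simp_all
    from decomp_unique[OF this] show "y = (P0, Q0, R0)" unfolding yy P0_def Q0_def R0_def by simp
  qed
qed

lemma less3: "(\<forall>i<3. P i) \<longleftrightarrow> P (0::nat) \<and> P 1 \<and> P 2"
  by (auto simp: numeral_3_eq_3 numeral_2_eq_2 less_Suc_eq)

lemma main:
  defines "S \<equiv> [F1 n \<phi> \<xi> \<eta> g, F2 n \<phi> \<xi> \<eta> g, F3 \<phi> \<xi> \<eta> g]"
  shows
    "(\<forall>i<3. S ! i \<subseteq> W1 \<phi> \<xi> \<eta> g) \<and>
     (\<forall>F \<in> W1 \<phi> \<xi> \<eta> g. \<exists>!(P, Q, R). P \<in> S ! 0 \<and> Q \<in> S ! 1 \<and> R \<in> S ! 2 \<and>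
          F = (\<lambda>X Y Z. P X Y Z + Q X Y Z + R X Y Z)) \<and>
     (\<forall>i<3. \<forall>j<3. i \<noteq> j \<longrightarrow> (\<forall>P \<in> S ! i. \<forall>Q \<in> S ! j. tensor_ip g P Q = 0)) \<and>
     (\<forall>i<3. \<forall>a \<in> Ggroup \<phi> \<xi> \<eta> g. \<forall>P \<in> S ! i. act a P \<in> S ! i)"
proof -
  have s0: "S ! 0 = F1 n \<phi> \<xi> \<eta> g" and s1: "S ! 1 = F2 n \<phi> \<xi> \<eta> g" and s2: "S ! 2 = F3 \<phi> \<xi> \<eta> g"
    unfolding S_def by simp_all
  have sub1: "F1 n \<phi> \<xi> \<eta> g \<subseteq> W1 \<phi> \<xi> \<eta> g" using F1_char W1_iff by blast
  have sub2: "F2 n \<phi> \<xi> \<eta> g \<subseteq> W1 \<phi> \<xi> \<eta> g" using F2_char W1_iff by blast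
  have sub3: "F3 \<phi> \<xi> \<eta> g \<subseteq> W1 \<phi> \<xi> \<eta> g" using F3_iff W1_iff by blast
  have o12: "tensor_ip g P Q = 0" if "P \<in> F1 n \<phi> \<xi> \<eta> g" "Q \<in> F2 n \<phi> \<xi> \<eta> g" for P Q
    using orth_F1_F2 that by blast
  have o13: "tensor_ip g P Q = 0" if "P \<in> F1 n \<phi> \<xi> \<eta> g" "Q \<in> F3 \<phi> \<xi> \<eta> g" for P Q
    using that orth_anti_symm unfolding F1_char F3_iff by blast
  have o23: "tensor_ip g P Q = 0" if "P \<in> F2 n \<phi> \<xi> \<eta> g" "Q \<in> F3 \<phi> \<xi> \<eta> g" for P Q
    using that orth_anti_symm F2_char unfolding F3_iff by blast
  have o21: "tensor_ip g P Q = 0" if "P \<in> F2 n \<phi> \<xi> \<eta> g" "Q \<in> F1 n \<phi> \<xi> \<eta> g" for P Q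
    using o12[OF that(2,1)] tip_sym[of P Q] by simp
  have o31: "tensor_ip g P Q = 0" if "P \<in> F3 \<phi> \<xi> \<eta> g" "Q \<in> F1 n \<phi> \<xi> \<eta> g" for P Q
    using o13[OF that(2,1)] tip_sym[of P Q] by simp
  have o32: "tensor_ip g P Q = 0" if "P \<in> F3 \<phi> \<xi> \<eta> g" "Q \<in> F2 n \<phi> \<xi> \<eta> g" for P Q
    using o23[OF that(2,1)] tip_sym[of P Q] by simp
  show ?thesis
    unfolding less3 s0 s1 s2
    apply (intro conjI)
    using sub1 sub2 sub3 decomp o12 o13 o23 o21 o31 o32 inv_F1 inv_F2 inv_F3
    by auto
qed

end

theorem proposition3p4:
  fixes n :: nat and \<phi> :: "'v::euclidean_space \<Rightarrow> 'v" and \<xi> :: 'v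
    and \<eta> :: "'v \<Rightarrow> real" and g :: "'v \<Rightarrow> 'v \<Rightarrow> real"
  assumes "n \<ge> 2" and "apm_structure n \<phi> \<xi> \<eta> g"
  defines "S \<equiv> [F1 n \<phi> \<xi> \<eta> g, F2 n \<phi> \<xi> \<eta> g, F3 \<phi> \<xi> \<eta> g]"
  shows
    \<comment> \<open>direct sum decomposition\<close>
    "(\<forall>i<3. S ! i \<subseteq> W1 \<phi> \<xi> \<eta> g) \<and>
     (\<forall>F \<in> W1 \<phi> \<xi> \<eta> g. \<exists>!(P, Q, R). P \<in> S ! 0 \<and> Q \<in> S ! 1 \<and> R \<in> S ! 2 \<and>
          F = (\<lambda>X Y Z. P X Y Z + Q X Y Z + R X Y Z)) \<and>
     \<comment> \<open>mutual orthogonality\<close>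
     (\<forall>i<3. \<forall>j<3. i \<noteq> j \<longrightarrow> (\<forall>P \<in> S ! i. \<forall>Q \<in> S ! j. tensor_ip g P Q = 0)) \<and>
     \<comment> \<open>G-invariance\<close>
     (\<forall>i<3. \<forall>a \<in> Ggroup \<phi> \<xi> \<eta> g. \<forall>P \<in> S ! i. act a P \<in> S ! i)"
proof -
  interpret apm n \<phi> \<xi> \<eta> g using assms(1,2) by unfold_locales
  show ?thesis unfolding S_def by (rule main)
qed

end
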